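(* Let $K\ge 2$ and $L\ge 2$ be integers and let $s_1,\dots,s_K\in[0,1]$ be offers that are not all zero. Consider the symmetric $L$-player responder game in which each responder's strategy is a probability vector $p=(p_1,\dots,p_K)$ (with $p_i\ge 0$, $\sum_i p_i=1$), $p_i$ being the probability of choosing proposer $i$; a responder who chooses proposer $i$ receives $s_i$ with probability $1/N_i$ and $0$ otherwise, where $N_i$ is the total number of responders who chose proposer $i$ (all choices being made independently). Then this game possesses a unique evolutionarily stable strategy.
   Context: This is the responder stage of the Multi-Proposer-Multi-Responder Ultimatum Game with $K$ proposers and $L$ responders: each proposer $i$ offers a share $s_i$ of a reward of size one; each responder independently selects one proposer according to its mixed strategy; a proposer selected by at least one responder receives $1-s_i$, otherwise $0$; among the responders who selected proposer $i$, exactly one chosen uniformly at random receives $s_i$, the rest receive $0$. Responders are drawn from an infinite population. For a symmetric $L$-player game, write $E(q;\,r)$ for the expected payoff of a focal player using strategy $q$ when each of the other $L-1$ players independently uses strategy $r$ (equivalently, is drawn from a population whose average strategy is $r$). A strategy $p$ is evolutionarily stable if for every strategy $q\neq p$ there is $\bar\varepsilon>0$ such that for all $\varepsilon\in(0,\bar\varepsilon)$, $E(p;\,(1-\varepsilon)p+\varepsilon q)>E(q;\,(1-\varepsilon)p+\varepsilon q)$. *)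

theory Defs
  imports Complex_Main
begin

definition strategies :: "nat \<Rightarrow> (nat \<Rightarrow> real) set" where
  "strategies K = {p. (\<forall>i<K. 0 \<le> p i) \<and> (\<forall>i\<ge>K. p i = 0) \<and> (\<Sum>i<K. p i) = 1}"

text \<open>Probability that the other L-1 responders (each independently choosing
  proposer i with probability x) produce exactly k choosers of proposer i,
  times 1/(k+1): the expected share 1/N_i of the focal responder.\<close>
definition share_factor :: "nat \<Rightarrow> real \<Rightarrow> real" where
  "share_factor L x =
     (\<Sum>k\<le>L - 1. real ((L - 1) choose k) * x ^ k * (1 - x) ^ (L - 1 - k) / real (k + 1))"

text \<open>E(q; r): expected payoff of a focal responder using q when each of the
  other L-1 responders independently uses r.\<close>
definition resp_payoff :: "nat \<Rightarrow> nat \<Rightarrow> (nat \<Rightarrow> real) \<Rightarrow> (nat \<Rightarrow> real) \<Rightarrow> (nat \<Rightarrow> real) \<Rightarrow> real" where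
  "resp_payoff K L s q r = (\<Sum>i<K. q i * s i * share_factor L (r i))"

definition is_ESS :: "nat \<Rightarrow> nat \<Rightarrow> (nat \<Rightarrow> real) \<Rightarrow> (nat \<Rightarrow> real) \<Rightarrow> bool" where
  "is_ESS K L s p \<longleftrightarrow> p \<in> strategies K \<and>
     (\<forall>q\<in>strategies K. q \<noteq> p \<longrightarrow>
        (\<exists>eb>0. \<forall>e. 0 < e \<and> e < eb \<longrightarrow>
           resp_payoff K L s p (\<lambda>i. (1 - e) * p i + e * q i) >
           resp_payoff K L s q (\<lambda>i. (1 - e) * p i + e * q i)))"

end

theory Submission
  imports Defs
begin


lemma sf_mult:
  fixes x :: real
  shows "real (Suc n) * x * share_factor (Suc n) x = 1 - (1 - x) ^ Suc n"
proof -
  have "real (Suc n) * x * share_factor (Suc n) x =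
     (\<Sum>k\<le>n. real (Suc n) * x * (real (n choose k) * x ^ k * (1 - x) ^ (n - k) / real (k + 1)))"
    unfolding share_factor_def by (simp add: sum_distrib_left)
  also have "\<dots> = (\<Sum>k\<le>n. real (Suc n choose Suc k) * x ^ Suc k * (1 - x) ^ (Suc n - Suc k))"
  proof (rule sum.cong[OF refl])
    fix k assume "k \<in> {..n}"
    have "real (Suc k) * real (Suc n choose Suc k) = real (Suc n) * real (n choose k)"
      using Suc_times_binomial[of k n] by (metis of_nat_mult)
    hence e: "real (Suc n choose Suc k) = real (Suc n) * real (n choose k) / real (Suc k)"
      by (simp add: field_simps)
    show "real (Suc n) * x * (real (n choose k) * x ^ k * (1 - x) ^ (n - k) / real (k + 1)) =
          real (Suc n choose Suc k) * x ^ Suc k * (1 - x) ^ (Suc n - Suc k)"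
      unfolding e by simp
  qed
  also have "\<dots> = (\<Sum>j\<le>Suc n. real (Suc n choose j) * x ^ j * (1 - x) ^ (Suc n - j)) - (1 - x) ^ Suc n"
    by (subst sum.atMost_Suc_shift) simp
  also have "(\<Sum>j\<le>Suc n. real (Suc n choose j) * x ^ j * (1 - x) ^ (Suc n - j)) = (x + (1 - x)) ^ Suc n"
    by (subst binomial_ring) simp
  finally show ?thesis by simp
qed

lemma sf_closed:
  fixes x :: real
  assumes "L \<ge> 1"
  shows "share_factor L x = (\<Sum>j<L. (1 - x) ^ j) / real L"
proof (cases "x = 0")
  case True
  obtain n where L: "L = Suc n" using assms by (cases L) auto
  have "share_factor L 0 = 1"
    unfolding share_factor_def L by (simp add: sum.atMost_shift)
  moreover have "(\<Sum>j<L. (1 - (0::real)) ^ j) = real L" by simp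
  ultimately show ?thesis using True assms by simp
next
  case False
  obtain n where L: "L = Suc n" using assms by (cases L) auto
  have a: "real L * x * share_factor L x = 1 - (1 - x) ^ L" using sf_mult L by simp
  have b: "1 - (1 - x) ^ L = x * (\<Sum>j<L. (1 - x) ^ j)"
    using one_diff_power_eq[of "1 - x" L] by simp
  from a b have "real L * x * share_factor L x = real L * x * ((\<Sum>j<L. (1 - x) ^ j) / real L)"
    using assms by simp
  hence "real L * share_factor L x = (\<Sum>j<L. (1 - x) ^ j)" using False assms by simp
  thus ?thesis using assms by (simp add: field_simps)
qed


lemma sf_strict_dec:
  fixes x y :: real
  assumes "L \<ge> 2" "0 \<le> x" "x < y" "y \<le> 1"
  shows "share_factor L y < share_factor L x"
proof -
  have "(\<Sum>j<L. (1 - y) ^ j) < (\<Sum>j<L. (1 - x) ^ j)"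
  proof (rule sum_strict_mono_ex1)
    show "\<forall>j\<in>{..<L}. (1 - y) ^ j \<le> (1 - x) ^ j"
      using assms by (auto intro!: power_mono)
    show "\<exists>j\<in>{..<L}. (1 - y) ^ j < (1 - x) ^ j"
      using assms by (intro bexI[of _ 1]) auto
  qed simp
  thus ?thesis using assms by (simp add: sf_closed divide_strict_right_mono)
qed

lemma sf_pos:
  fixes x :: real
  assumes "L \<ge> 1" "x \<le> 1"
  shows "share_factor L x > 0"
proof -
  have "(\<Sum>j<L. (1 - x) ^ j) > 0"
  proof (rule sum_pos2[of _ 0])
    show "\<And>i. i \<in> {..<L} \<Longrightarrow> 0 \<le> (1 - x) ^ i" using assms by simp
  qed (use assms in auto)
  thus ?thesis using assms by (simp add: sf_closed)
qed

lemma sf_cont: "L \<ge> 1 \<Longrightarrow> continuous_on A (share_factor L)"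
  by (simp add: sf_closed continuous_intros)

lemma sf_0: "L \<ge> 1 \<Longrightarrow> share_factor L 0 = 1"
  by (simp add: sf_closed)

lemma sf_1: "L \<ge> 1 \<Longrightarrow> share_factor L 1 = 1 / real L"
proof -
  assume "L \<ge> 1"
  then obtain n where L: "L = Suc n" by (cases L) auto
  have "(\<Sum>j<L. (1 - (1::real)) ^ j) = 1" unfolding L by (simp add: sum.lessThan_Suc_shift del: sum.lessThan_Suc)
  thus ?thesis using \<open>L \<ge> 1\<close> by (simp add: sf_closed)
qed


lemma inv_clamp:
  fixes \<phi> :: "real \<Rightarrow> real"
  assumes cont: "continuous_on {0..1} \<phi>"
    and dec: "\<And>x y. 0 \<le> x \<Longrightarrow> x < y \<Longrightarrow> y \<le> 1 \<Longrightarrow> \<phi> y < \<phi> x"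
  obtains \<psi> where "continuous_on UNIV \<psi>" "\<And>c. 0 \<le> \<psi> c \<and> \<psi> c \<le> 1"
    "\<And>c. \<phi> (\<psi> c) = max (\<phi> 1) (min (\<phi> 0) c)"
proof -
  have inj: "inj_on \<phi> {0..1}"
  proof (rule inj_onI)
    fix x y assume "x \<in> {0..1}" "y \<in> {0..1}" "\<phi> x = \<phi> y"
    thus "x = y" using dec[of x y] dec[of y x] by (cases x y rule: linorder_cases) auto
  qed
  define cl where "cl = (\<lambda>c::real. max (\<phi> 1) (min (\<phi> 0) c))"
  have p10: "\<phi> 1 \<le> \<phi> 0" using dec[of 0 1] by simp
  have clin: "cl c \<in> \<phi> ` {0..1}" for c
  proof -
    have "\<exists>x. 0 \<le> x \<and> x \<le> 1 \<and> \<phi> x = cl c"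
      by (rule IVT2'[OF _ _ _ cont]) (use p10 in \<open>auto simp: cl_def\<close>)
    thus ?thesis by force
  qed
  define \<psi> where "\<psi> = (\<lambda>c. the_inv_into {0..1} \<phi> (cl c))"
  have "continuous_on UNIV \<psi>"
    unfolding \<psi>_def
  proof (rule continuous_on_compose2[OF continuous_on_inv_into[OF cont _ inj]])
    show "continuous_on UNIV cl" unfolding cl_def by (intro continuous_intros)
    show "cl ` UNIV \<subseteq> \<phi> ` {0..1}" using clin by auto
  qed simp
  moreover have "0 \<le> \<psi> c \<and> \<psi> c \<le> 1" for c
    using the_inv_into_into[OF inj clin, of "{0..1}"] unfolding \<psi>_def by auto
  moreover have "\<phi> (\<psi> c) = max (\<phi> 1) (min (\<phi> 0) c)" for c
    using f_the_inv_into_f[OF inj clin] unfolding \<psi>_def cl_def by simp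
  ultimately show ?thesis using that by blast
qed


lemma strong:
  assumes L2: "L \<ge> 2" and s: "\<forall>i<K. 0 \<le> s i"
    and p: "p \<in> strategies K" and q: "q \<in> strategies K" "q \<noteq> p"
    and e: "0 < e" "e < 1" and c: "c > 0"
    and A: "\<And>i. i < K \<Longrightarrow> p i > 0 \<Longrightarrow> s i > 0 \<and> c \<le> s i * share_factor L (p i)"
    and B: "\<And>i. i < K \<Longrightarrow> p i < 1 \<Longrightarrow> s i * share_factor L (p i) \<le> c"
  shows "resp_payoff K L s q (\<lambda>i. (1 - e) * p i + e * q i)
       < resp_payoff K L s p (\<lambda>i. (1 - e) * p i + e * q i)"
proof -
  define r where "r = (\<lambda>i. (1 - e) * p i + e * q i)"
  have p0: "\<And>i. i < K \<Longrightarrow> 0 \<le> p i" and pK: "\<And>i. i \<ge> K \<Longrightarrow> p i = 0"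
    and ps: "(\<Sum>i<K. p i) = 1" using p by (auto simp: strategies_def)
  have q0: "\<And>i. i < K \<Longrightarrow> 0 \<le> q i" and qK: "\<And>i. i \<ge> K \<Longrightarrow> q i = 0"
    and qs: "(\<Sum>i<K. q i) = 1" using q by (auto simp: strategies_def)
  have p1: "p i \<le> 1" if "i < K" for i
    using member_le_sum[of i "{..<K}" p] p0 ps that by auto
  have q1: "q i \<le> 1" if "i < K" for i
    using member_le_sum[of i "{..<K}" q] q0 qs that by auto
  define T where "T = (\<lambda>i. (p i - q i) * (s i * share_factor L (r i) - c))"
  have Teq: "T i = p i * s i * share_factor L (r i) - q i * s i * share_factor L (r i) - (c * p i - c * q i)" for i
    unfolding T_def by (simp add: algebra_simps)
  have "(\<Sum>i<K. T i) = resp_payoff K L s p r - resp_payoff K L s q r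
       - c * ((\<Sum>i<K. p i) - (\<Sum>i<K. q i))"
  proof -
    have "(\<Sum>i<K. c * p i) = c * (\<Sum>i<K. p i)" "(\<Sum>i<K. c * q i) = c * (\<Sum>i<K. q i)"
      by (simp_all add: sum_distrib_left)
    thus ?thesis unfolding Teq resp_payoff_def sum_subtractf by argo
  qed
  hence sumT: "(\<Sum>i<K. T i) = resp_payoff K L s p r - resp_payoff K L s q r"
    using ps qs by simp
  have Tpos: "T i > 0" if i: "i < K" "p i \<noteq> q i" for i
  proof (cases "q i < p i")
    case True
    hence pp: "p i > 0" using q0 i by force
    from A[OF i(1) pp] have si: "s i > 0" and cs: "c \<le> s i * share_factor L (p i)" by auto
    have eq: "e * q i < e * p i" using True e by simp
    have "r i = p i - (e * p i - e * q i)" unfolding r_def by (simp add: algebra_simps)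
    hence "r i < p i" using eq by linarith
    have "0 \<le> r i" using e p0 q0 i unfolding r_def by simp
    note this \<open>r i < p i\<close>
    hence "share_factor L (p i) < share_factor L (r i)"
      using sf_strict_dec[OF L2, of "r i" "p i"] p1 i by auto
    hence "s i * share_factor L (p i) < s i * share_factor L (r i)" using si by simp
    thus ?thesis unfolding T_def using True cs by (intro mult_pos_pos) auto
  next
    case False
    hence lt: "p i < q i" using i by auto
    hence "p i < 1" using q1 i by force
    from B[OF i(1) this] have cs: "s i * share_factor L (p i) \<le> c" .
    have eq: "e * p i < e * q i" using lt e by simp
    have req: "r i = p i + (e * q i - e * p i)" unfolding r_def by (simp add: algebra_simps)
    hence "p i < r i" using eq by linarith
    have "(1 - e) * p i \<le> (1 - e) * 1" "e * q i \<le> e * 1"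
      using e p1 q1 i by (auto intro!: mult_left_mono)
    hence "r i \<le> 1" unfolding r_def by simp
    note \<open>p i < r i\<close> this
    hence sl: "share_factor L (r i) < share_factor L (p i)"
      using sf_strict_dec[OF L2, of "p i" "r i"] p0 i by auto
    have "s i * share_factor L (r i) < c"
    proof (cases "s i = 0")
      case True thus ?thesis using c by simp
    next
      case False
      hence "s i > 0" using s i by force
      hence "s i * share_factor L (r i) < s i * share_factor L (p i)" using sl by simp
      thus ?thesis using cs by simp
    qed
    thus ?thesis unfolding T_def using lt by (intro mult_neg_neg) auto
  qed
  obtain j where j: "j < K" "p j \<noteq> q j"
  proof -
    from q(2) obtain j where "p j \<noteq> q j" by (metis ext)
    moreover have "j < K" using calculation pK qK by (metis not_le)
    ultimately show ?thesis using that by blast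
  qed
  have "(\<Sum>i<K. (0::real)) < (\<Sum>i<K. T i)"
  proof (rule sum_strict_mono_ex1)
    show "\<forall>i\<in>{..<K}. 0 \<le> T i"
    proof
      fix i assume "i \<in> {..<K}"
      thus "0 \<le> T i" using Tpos[of i] by (cases "p i = q i") (simp_all add: T_def less_imp_le)
    qed
    show "\<exists>i\<in>{..<K}. 0 < T i" using Tpos j by auto
  qed simp
  thus ?thesis using sumT unfolding r_def by simp
qed


lemma exist_eq:
  fixes K L :: nat and s :: "nat \<Rightarrow> real"
  assumes L2: "L \<ge> 2"
    and s01: "\<forall>i<K. 0 \<le> s i \<and> s i \<le> 1"
    and ex: "\<exists>i<K. s i \<noteq> 0"
  shows "\<exists>p c. p \<in> strategies K \<and> c > 0 \<and>
     (\<forall>i<K. p i > 0 \<longrightarrow> s i > 0 \<and> c \<le> s i * share_factor L (p i)) \<and>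
     (\<forall>i<K. p i < 1 \<longrightarrow> s i * share_factor L (p i) \<le> c)"
proof -
  have L1: "L \<ge> 1" using L2 by simp
  define P where "P = {i\<in>{..<K}. 0 < s i}"
  have "\<forall>i. \<exists>\<psi>. i \<in> P \<longrightarrow> (continuous_on UNIV \<psi> \<and> (\<forall>c. 0 \<le> \<psi> c \<and> \<psi> c \<le> 1) \<and>
          (\<forall>c. s i * share_factor L (\<psi> c) = max (s i / real L) (min (s i) c)))"
  proof
    fix i
    show "\<exists>\<psi>. i \<in> P \<longrightarrow> (continuous_on UNIV \<psi> \<and> (\<forall>c. 0 \<le> \<psi> c \<and> \<psi> c \<le> 1) \<and>
          (\<forall>c. s i * share_factor L (\<psi> c) = max (s i / real L) (min (s i) c)))"
    proof (cases "i \<in> P")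
      case True
      hence si: "s i > 0" by (simp add: P_def)
      obtain \<psi> where "continuous_on UNIV \<psi>" "\<And>c. 0 \<le> \<psi> c \<and> \<psi> c \<le> 1"
        "\<And>c. s i * share_factor L (\<psi> c) = max (s i * share_factor L 1) (min (s i * share_factor L 0) c)"
      proof (rule inv_clamp[of "\<lambda>x. s i * share_factor L x"])
        show "continuous_on {0..1} (\<lambda>x. s i * share_factor L x)"
          by (intro continuous_intros sf_cont[OF L1])
        show "\<And>x y. 0 \<le> x \<Longrightarrow> x < y \<Longrightarrow> y \<le> 1 \<Longrightarrow> s i * share_factor L y < s i * share_factor L x"
          using sf_strict_dec[OF L2] si by simp
      qed blast
      thus ?thesis using sf_0[OF L1] sf_1[OF L1] by auto
    qed simp
  qed
  then obtain \<Psi> where \<Psi>0: "\<forall>i. i \<in> P \<longrightarrow> (continuous_on UNIV (\<Psi> i) \<and> (\<forall>c. 0 \<le> \<Psi> i c \<and> \<Psi> i c \<le> 1) \<and>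
          (\<forall>c. s i * share_factor L (\<Psi> i c) = max (s i / real L) (min (s i) c)))"
    by (rule choice[THEN exE])
  have \<Psi>: "\<And>i. i \<in> P \<Longrightarrow> continuous_on UNIV (\<Psi> i) \<and> (\<forall>c. 0 \<le> \<Psi> i c \<and> \<Psi> i c \<le> 1) \<and>
          (\<forall>c. s i * share_factor L (\<Psi> i c) = max (s i / real L) (min (s i) c))"
    using \<Psi>0 by blast
  have sdec: "s i * share_factor L y < s i * share_factor L x" if "i \<in> P" "0 \<le> x" "x < y" "y \<le> 1" for i x y
    using sf_strict_dec[OF L2 that(2-4)] that(1) by (simp add: P_def)
  have Psi0: "\<Psi> i c = 0" if "i \<in> P" "s i * share_factor L (\<Psi> i c) = s i" for i c
  proof (rule ccontr)
    assume "\<Psi> i c \<noteq> 0"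
    hence "0 < \<Psi> i c" using \<Psi>[OF that(1)] by (metis less_eq_real_def)
    hence "s i * share_factor L (\<Psi> i c) < s i * share_factor L 0"
      using sdec[OF that(1), of 0 "\<Psi> i c"] \<Psi>[OF that(1)] by auto
    thus False using that sf_0[OF L1] by simp
  qed
  have Psi1: "\<Psi> i c = 1" if "i \<in> P" "s i * share_factor L (\<Psi> i c) = s i / real L" for i c
  proof (rule ccontr)
    assume "\<Psi> i c \<noteq> 1"
    hence "\<Psi> i c < 1" using \<Psi>[OF that(1)] by (metis less_eq_real_def)
    hence "s i * share_factor L 1 < s i * share_factor L (\<Psi> i c)"
      using sdec[OF that(1), of "\<Psi> i c" 1] \<Psi>[OF that(1)] by auto
    thus False using that sf_1[OF L1] by simp
  qed
  have Lpos: "real L > 1" using L2 by simp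
  have sLle: "s i / real L \<le> s i" if "i \<in> P" for i
    using that Lpos by (simp add: P_def divide_le_eq)
  define S where "S = (\<lambda>c. \<Sum>i\<in>P. \<Psi> i c)"
  have finP: "finite P" by (simp add: P_def)
  have Scont: "continuous_on {a..b} S" for a b
    unfolding S_def
  proof (intro continuous_on_sum)
    fix i assume "i \<in> P"
    hence "continuous_on UNIV (\<Psi> i)" using \<Psi> by blast
    thus "continuous_on {a..b} (\<Psi> i)" by (rule continuous_on_subset) simp
  qed
  have "S 1 = 0" unfolding S_def
  proof (rule sum.neutral, rule ballI)
    fix i assume i: "i \<in> P"
    have "s i \<le> 1" using i s01 by (simp add: P_def)
    thus "\<Psi> i 1 = 0" using Psi0[OF i, of 1] \<Psi>[OF i] sLle[OF i] by simp
  qed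
  obtain i0 where i0: "i0 \<in> P" using ex s01 unfolding P_def by (metis less_eq_real_def mem_Collect_eq lessThan_iff)
  define clo where "clo = s i0 / real L"
  have clo_pos: "clo > 0" using i0 Lpos by (simp add: clo_def P_def)
  have clo1: "clo \<le> 1" using sLle[OF i0] i0 s01 unfolding clo_def P_def by force
  have "\<Psi> i0 clo = 1" using Psi1[OF i0, of clo] \<Psi>[OF i0] sLle[OF i0] by (simp add: clo_def)
  hence "1 \<le> S clo" unfolding S_def
    using member_le_sum[of i0 P "\<lambda>i. \<Psi> i clo"] i0 finP \<Psi> by auto
  then obtain c where c: "clo \<le> c" "c \<le> 1" "S c = 1"
    using IVT2'[of S 1 1 clo, OF _ _ clo1 Scont] \<open>S 1 = 0\<close> by auto
  define p where "p = (\<lambda>i. if i \<in> P then \<Psi> i c else 0)"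
  have "p \<in> strategies K"
  proof -
    have "S c = (\<Sum>i<K. if 0 < s i then \<Psi> i c else 0)" unfolding S_def P_def
      by (rule sum.inter_filter) simp
    moreover have "(\<Sum>i<K. p i) = (\<Sum>i<K. if 0 < s i then \<Psi> i c else 0)"
      by (rule sum.cong) (auto simp: p_def P_def)
    ultimately have "(\<Sum>i<K. p i) = S c" by simp
    moreover have "\<forall>i<K. 0 \<le> p i" using \<Psi> by (simp add: p_def)
    moreover have "\<forall>i\<ge>K. p i = 0" by (simp add: p_def P_def)
    ultimately show ?thesis using c by (simp add: strategies_def)
  qed
  moreover have "c > 0" using c clo_pos by simp
  moreover have "\<forall>i<K. p i > 0 \<longrightarrow> s i > 0 \<and> c \<le> s i * share_factor L (p i)"
  proof (intro allI impI)
    fix i assume i: "i < K" "p i > 0"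
    hence iP: "i \<in> P" by (auto simp: p_def split: if_splits)
    have "\<not> c > s i"
    proof
      assume "c > s i"
      hence "s i * share_factor L (\<Psi> i c) = s i" using \<Psi>[OF iP] sLle[OF iP] by simp
      hence "\<Psi> i c = 0" using Psi0[OF iP] by blast
      thus False using i iP by (simp add: p_def)
    qed
    thus "s i > 0 \<and> c \<le> s i * share_factor L (p i)"
      using iP \<Psi>[OF iP] by (simp add: p_def P_def)
  qed
  moreover have "\<forall>i<K. p i < 1 \<longrightarrow> s i * share_factor L (p i) \<le> c"
  proof (intro allI impI)
    fix i assume i: "i < K" "p i < 1"
    show "s i * share_factor L (p i) \<le> c"
    proof (cases "i \<in> P")
      case False
      hence "s i = 0" using i s01 unfolding P_def by (auto simp: not_less intro: order.antisym)
      thus ?thesis using \<open>c > 0\<close> by simp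
    next
      case iP: True
      have "\<not> c < s i / real L"
      proof
        assume "c < s i / real L"
        hence "s i * share_factor L (\<Psi> i c) = s i / real L" using \<Psi>[OF iP] sLle[OF iP] by simp
        hence "\<Psi> i c = 1" using Psi1[OF iP] by blast
        thus False using i iP by (simp add: p_def)
      qed
      thus ?thesis using iP \<Psi>[OF iP] by (simp add: p_def)
    qed
  qed
  ultimately show ?thesis by blast
qed

theorem theorem2:
  fixes K L :: nat and s :: "nat \<Rightarrow> real"
  assumes "K \<ge> 2" and "L \<ge> 2"
    and "\<forall>i<K. 0 \<le> s i \<and> s i \<le> 1"
    and "\<exists>i<K. s i \<noteq> 0"
  shows "\<exists>!p. is_ESS K L s p"
proof -
  obtain p c where p: "p \<in> strategies K" and c: "c > 0"
    and A: "\<forall>i<K. p i > 0 \<longrightarrow> s i > 0 \<and> c \<le> s i * share_factor L (p i)"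
    and B: "\<forall>i<K. p i < 1 \<longrightarrow> s i * share_factor L (p i) \<le> c"
    using exist_eq[OF assms(2-4)] by blast
  have sn: "\<forall>i<K. 0 \<le> s i" using assms(3) by simp
  have st: "resp_payoff K L s q (\<lambda>i. (1 - e) * p i + e * q i)
       < resp_payoff K L s p (\<lambda>i. (1 - e) * p i + e * q i)"
    if "q \<in> strategies K" "q \<noteq> p" "0 < e" "e < 1" for q e
    by (rule strong[OF assms(2) sn p that c]) (use A B in auto)
  have ess: "is_ESS K L s p"
    unfolding is_ESS_def using p st by (intro conjI ballI impI exI[of _ 1]) auto
  moreover have "p' = p" if p': "is_ESS K L s p'" for p'
  proof (rule ccontr)
    assume ne: "p' \<noteq> p"
    from p' have p's: "p' \<in> strategies K" by (simp add: is_ESS_def)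
    from p' have "\<forall>q\<in>strategies K. q \<noteq> p' \<longrightarrow>
        (\<exists>eb>0. \<forall>e. 0 < e \<and> e < eb \<longrightarrow>
           resp_payoff K L s p' (\<lambda>i. (1 - e) * p' i + e * q i) >
           resp_payoff K L s q (\<lambda>i. (1 - e) * p' i + e * q i))" by (simp add: is_ESS_def)
    from this[rule_format, OF p ne[symmetric]] obtain eb where eb: "eb > 0" and
      H: "\<forall>e. 0 < e \<and> e < eb \<longrightarrow>
           resp_payoff K L s p' (\<lambda>i. (1 - e) * p' i + e * p i) >
           resp_payoff K L s p (\<lambda>i. (1 - e) * p' i + e * p i)" by blast
    define e where "e = min (eb / 2) (1 / 2)"
    have e: "0 < e" "e < eb" "e < 1" using eb by (auto simp: e_def)
    have r: "(\<lambda>i. (1 - (1 - e)) * p i + (1 - e) * p' i) = (\<lambda>i. (1 - e) * p' i + e * p i)"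
      by (simp add: algebra_simps)
    have "resp_payoff K L s p' (\<lambda>i. (1 - e) * p' i + e * p i)
       < resp_payoff K L s p (\<lambda>i. (1 - e) * p' i + e * p i)"
      using st[OF p's ne, of "1 - e"] e unfolding r by simp
    moreover have "resp_payoff K L s p' (\<lambda>i. (1 - e) * p' i + e * p i) >
           resp_payoff K L s p (\<lambda>i. (1 - e) * p' i + e * p i)" using H e by blast
    ultimately show False by simp
  qed
  ultimately show ?thesis by blast
qed

end
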